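(* For every Tychonoff space $X$, the following are equivalent: (1) $C_p(X)\models U_{fin}(\Gamma_f,\Omega_f)$ for every $f\in C_p(X)$; (2) $X\models U_{fin}(\Gamma_F,\Omega)$.
   Context: All spaces are Tychonoff; $C_p(X)$ is $C(X)$ with pointwise convergence topology; basic neighbourhoods are $\langle f,K,\varepsilon\rangle=\{g\in C(X):|g(x)-f(x)|<\varepsilon\ \forall x\in K\}$, $K\subseteq X$ finite, $\varepsilon>0$. For $f\in C_p(X)$, $\Gamma_f$ is the family of infinite $A\subseteq C(X)$ with $f\notin A$ such that every neighbourhood of $f$ contains all but finitely many elements of $A$. $C_p(X)\models U_{fin}(\Gamma_f,\Omega_f)$ means: for every sequence $(S_n)_{n\in\omega}$ of elements of $\Gamma_f$ there are finite $\mathcal F_n\subseteq S_n$ such that for every finite $K=\{x_1,\dots,x_k\}\subseteq X$ and $\varepsilon>0$ there is $n$ such that for each $j\le k$ some $g\in\mathcal F_n$ satisfies $|g(x_j)-f(x_j)|<\varepsilon$. Zero-set: $g^{-1}(0)$, $g\in C(X)$; cozero-set: its complement. A cover $\mathcal U$ of $X$ always means $X=\bigcup\mathcal U$, $X\notin\mathcal U$; $\gamma$-cover: infinite, each point in all but finitely many members. $\Gamma_F$: $\gamma$-covers $\mathcal U$ of $X$ by cozero-sets for which there are zero-sets $F(U)\subseteq U$ ($U\in\mathcal U$) with $\{F(U):U\in\mathcal U\}$ a $\gamma$-cover of $X$. $X\models U_{fin}(\Gamma_F,\Omega)$ means: whenever $\mathcal U_n\in\Gamma_F$ ($n\in\omega$)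 and no $\mathcal U_n$ contains a finite subcover, there are finite $\mathcal F_n\subseteq\mathcal U_n$ such that every finite subset of $X$ is contained in $\bigcup\mathcal F_n$ for some $n$ (i.e. $\{\bigcup\mathcal F_n:n\in\omega\}$ is an $\omega$-cover). *)

theory Defs
  imports "HOL-Analysis.Analysis"
begin

definition tychonoff_space :: "'a topology \<Rightarrow> bool" where
  "tychonoff_space X \<longleftrightarrow> completely_regular_space X \<and> Hausdorff_space X"

text \<open>C(X): continuous real functions on X, normalised to 0 outside the carrier
  so that each element of C(X) is represented by exactly one HOL function.\<close>
definition Cfun :: "'a topology \<Rightarrow> ('a \<Rightarrow> real) set" where
  "Cfun X = {f. continuous_map X euclideanreal f \<and> (\<forall>x. x \<notin> topspace X \<longrightarrow> f x = 0)}"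

definition cp_nbhd :: "'a topology \<Rightarrow> ('a \<Rightarrow> real) \<Rightarrow> 'a set \<Rightarrow> real \<Rightarrow> ('a \<Rightarrow> real) set" where
  "cp_nbhd X f K \<epsilon> = {g \<in> Cfun X. \<forall>x\<in>K. \<bar>g x - f x\<bar> < \<epsilon>}"

text \<open>Gamma_f: infinite sequences-as-sets in C(X) not containing f and converging to f
  in C_p(X) (every basic neighbourhood contains all but finitely many elements).\<close>
definition Gamma_f :: "'a topology \<Rightarrow> ('a \<Rightarrow> real) \<Rightarrow> ('a \<Rightarrow> real) set set" where
  "Gamma_f X f = {A. infinite A \<and> A \<subseteq> Cfun X \<and> f \<notin> A \<and>
     (\<forall>K \<epsilon>. finite K \<and> K \<subseteq> topspace X \<and> \<epsilon> > 0 \<longrightarrow> finite (A - cp_nbhd X f K \<epsilon>))}"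

definition Cp_Ufin_Gamma_Omega :: "'a topology \<Rightarrow> ('a \<Rightarrow> real) \<Rightarrow> bool" where
  "Cp_Ufin_Gamma_Omega X f \<longleftrightarrow>
     (\<forall>S :: nat \<Rightarrow> ('a \<Rightarrow> real) set. (\<forall>n. S n \<in> Gamma_f X f) \<longrightarrow>
        (\<exists>F :: nat \<Rightarrow> ('a \<Rightarrow> real) set. (\<forall>n. finite (F n) \<and> F n \<subseteq> S n) \<and>
           (\<forall>K \<epsilon>. finite K \<and> K \<subseteq> topspace X \<and> \<epsilon> > 0 \<longrightarrow>
              (\<exists>n. \<forall>x\<in>K. \<exists>g\<in>F n. \<bar>g x - f x\<bar> < \<epsilon>))))"

definition zero_set :: "'a topology \<Rightarrow> 'a set \<Rightarrow> bool" where
  "zero_set X Z \<longleftrightarrow> (\<exists>g. continuous_map X euclideanreal g \<and> Z = {x \<in> topspace X. g x = 0})"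

definition cozero_set :: "'a topology \<Rightarrow> 'a set \<Rightarrow> bool" where
  "cozero_set X U \<longleftrightarrow> (\<exists>g. continuous_map X euclideanreal g \<and> U = {x \<in> topspace X. g x \<noteq> 0})"

definition is_cover :: "'a topology \<Rightarrow> 'a set set \<Rightarrow> bool" where
  "is_cover X \<U> \<longleftrightarrow> \<Union>\<U> = topspace X \<and> topspace X \<notin> \<U>"

definition gamma_cover :: "'a topology \<Rightarrow> 'a set set \<Rightarrow> bool" where
  "gamma_cover X \<U> \<longleftrightarrow> is_cover X \<U> \<and> infinite \<U> \<and>
     (\<forall>x\<in>topspace X. finite {U \<in> \<U>. x \<notin> U})"

definition Gamma_F :: "'a topology \<Rightarrow> 'a set set set" where
  "Gamma_F X = {\<U>. gamma_cover X \<U> \<and> (\<forall>U\<in>\<U>. cozero_set X U) \<and>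
     (\<exists>F. (\<forall>U\<in>\<U>. zero_set X (F U) \<and> F U \<subseteq> U) \<and> gamma_cover X (F ` \<U>))}"

definition X_Ufin_GammaF_Omega :: "'a topology \<Rightarrow> bool" where
  "X_Ufin_GammaF_Omega X \<longleftrightarrow>
     (\<forall>\<U> :: nat \<Rightarrow> 'a set set.
        (\<forall>n. \<U> n \<in> Gamma_F X \<and> \<not> (\<exists>\<V>. \<V> \<subseteq> \<U> n \<and> finite \<V> \<and> \<Union>\<V> = topspace X)) \<longrightarrow>
        (\<exists>F :: nat \<Rightarrow> 'a set set. (\<forall>n. finite (F n) \<and> F n \<subseteq> \<U> n) \<and>
           (\<forall>K. finite K \<and> K \<subseteq> topspace X \<longrightarrow> (\<exists>n. K \<subseteq> \<Union>(F n)))))"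

end

theory Submission imports Defs begin

lemma Cfun_restrict:
  assumes "continuous_map X euclideanreal h"
  shows "(\<lambda>x. if x \<in> topspace X then h x else 0) \<in> Cfun X"
  unfolding Cfun_def using continuous_map_eq[OF assms] by auto

lemma sep_fun:
  assumes "cozero_set X U" "zero_set X Z" "Z \<subseteq> U"
  obtains h where "h \<in> Cfun X" "\<forall>x\<in>topspace X. (h x = 0 \<longleftrightarrow> x \<in> Z) \<and> (x \<notin> U \<longrightarrow> h x = 1)"
proof -
  obtain g where g: "continuous_map X euclideanreal g" "U = {x \<in> topspace X. g x \<noteq> 0}"
    using assms(1) unfolding cozero_set_def by blast
  obtain k where k: "continuous_map X euclideanreal k" "Z = {x \<in> topspace X. k x = 0}"
    using assms(2) unfolding zero_set_def by blast
  have nz: "\<bar>k x\<bar> + \<bar>g x\<bar> \<noteq> 0" if "x \<in> topspace X" for x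
    using that assms(3) g k by auto
  have c: "continuous_map X euclideanreal (\<lambda>x. \<bar>k x\<bar> / (\<bar>k x\<bar> + \<bar>g x\<bar>))"
    by (intro continuous_intros g k nz)
  show ?thesis
  proof (rule that[OF Cfun_restrict[OF c]], intro ballI conjI)
    fix x assume x: "x \<in> topspace X"
    have pos: "\<bar>k x\<bar> + \<bar>g x\<bar> > 0" using nz[OF x] by linarith
    show "((if x \<in> topspace X then \<bar>k x\<bar> / (\<bar>k x\<bar> + \<bar>g x\<bar>) else 0) = 0) = (x \<in> Z)"
      using x pos k by auto
    show "x \<notin> U \<longrightarrow> (if x \<in> topspace X then \<bar>k x\<bar> / (\<bar>k x\<bar> + \<bar>g x\<bar>) else 0) = 1"
      using x pos g by auto
  qed
qed

lemma dir12:
  assumes H: "\<forall>f\<in>Cfun X. Cp_Ufin_Gamma_Omega X f"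
  shows "X_Ufin_GammaF_Omega X"
  unfolding X_Ufin_GammaF_Omega_def
proof (intro allI impI)
  fix \<U> :: "nat \<Rightarrow> 'a set set"
  assume A: "\<forall>n. \<U> n \<in> Gamma_F X \<and> \<not> (\<exists>\<V>. \<V> \<subseteq> \<U> n \<and> finite \<V> \<and> \<Union>\<V> = topspace X)"
  have "\<forall>n. \<exists>Fz. (\<forall>U\<in>\<U> n. zero_set X (Fz U) \<and> Fz U \<subseteq> U) \<and> gamma_cover X (Fz ` \<U> n)"
    using A by (auto simp: Gamma_F_def)
  then obtain Fz where Fz: "\<And>n. (\<forall>U\<in>\<U> n. zero_set X (Fz n U) \<and> Fz n U \<subseteq> U) \<and> gamma_cover X (Fz n ` \<U> n)"
    by metis
  have gU: "\<And>n. gamma_cover X (\<U> n)" and cz: "\<And>n U. U \<in> \<U> n \<Longrightarrow> cozero_set X U"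
    using A by (auto simp: Gamma_F_def)
  define Zs where "Zs n = Fz n ` \<U> n" for n
  define UZ where "UZ n Z = (SOME U. U \<in> \<U> n \<and> Fz n U = Z)" for n Z
  have UZ: "UZ n Z \<in> \<U> n \<and> Fz n (UZ n Z) = Z" if "Z \<in> Zs n" for n Z
    unfolding UZ_def using that someI_ex[of "\<lambda>U. U \<in> \<U> n \<and> Fz n U = Z"] by (auto simp: Zs_def)
  have Zsub: "Z \<subseteq> topspace X" if "Z \<in> Zs n" for n Z
    using Fz[of n] that by (auto simp: Zs_def zero_set_def)
  have "\<forall>n Z. \<exists>h. Z \<in> Zs n \<longrightarrow> h \<in> Cfun X \<and> (\<forall>x\<in>topspace X. (h x = 0 \<longleftrightarrow> x \<in> Z) \<and> (x \<notin> UZ n Z \<longrightarrow> h x = 1))"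
  proof (intro allI)
    fix n Z
    show "\<exists>h. Z \<in> Zs n \<longrightarrow> h \<in> Cfun X \<and> (\<forall>x\<in>topspace X. (h x = 0 \<longleftrightarrow> x \<in> Z) \<and> (x \<notin> UZ n Z \<longrightarrow> h x = 1))"
    proof (cases "Z \<in> Zs n")
      case True
      have "cozero_set X (UZ n Z)" using cz UZ[OF True] by blast
      moreover have "zero_set X Z" "Z \<subseteq> UZ n Z" using Fz[of n] UZ[OF True] by metis+
      ultimately show ?thesis using sep_fun by metis
    qed auto
  qed
  then obtain HH where HH: "\<And>n Z. Z \<in> Zs n \<Longrightarrow> HH n Z \<in> Cfun X \<and> (\<forall>x\<in>topspace X. (HH n Z x = 0 \<longleftrightarrow> x \<in> Z) \<and> (x \<notin> UZ n Z \<longrightarrow> HH n Z x = 1))"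
    by metis
  have inj: "inj_on (HH n) (Zs n)" for n
  proof (rule inj_onI)
    fix Z Z' assume Z: "Z \<in> Zs n" "Z' \<in> Zs n" "HH n Z = HH n Z'"
    have "Z = {x \<in> topspace X. HH n Z x = 0}" using HH[OF Z(1)] Zsub[OF Z(1)] by auto
    also have "\<dots> = Z'" using HH[OF Z(2)] Zsub[OF Z(2)] Z(3) by auto
    finally show "Z = Z'" .
  qed
  define S where "S n = HH n ` Zs n" for n
  have SG: "S n \<in> Gamma_f X (\<lambda>x. 0)" for n
    unfolding Gamma_f_def
  proof (intro CollectI conjI allI impI)
    have "infinite (Zs n)" using Fz[of n] by (simp add: Zs_def gamma_cover_def)
    then show "infinite (S n)" unfolding S_def using inj finite_imageD by blast
    show "S n \<subseteq> Cfun X" using HH by (auto simp: S_def)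
    show "(\<lambda>x. 0) \<notin> S n"
    proof
      assume "(\<lambda>x. 0) \<in> S n"
      then obtain Z where Z: "Z \<in> Zs n" "HH n Z = (\<lambda>x. 0)" by (auto simp: S_def)
      then have "topspace X \<subseteq> Z" using HH[OF Z(1)] by auto
      moreover have "Z \<subseteq> UZ n Z" using Fz[of n] UZ[OF Z(1)] by metis
      moreover have "UZ n Z \<subseteq> topspace X" using cz UZ[OF Z(1)] by (auto simp: cozero_set_def)
      ultimately have "UZ n Z = topspace X" by blast
      then have "topspace X \<in> \<U> n" using UZ[OF Z(1)] by metis
      then show False using gU[of n] by (simp add: gamma_cover_def is_cover_def)
    qed
    fix K and \<epsilon> :: real
    assume K: "finite K \<and> K \<subseteq> topspace X \<and> 0 < \<epsilon>"
    have "S n - cp_nbhd X (\<lambda>x. 0) K \<epsilon> \<subseteq> HH n ` (\<Union>x\<in>K. {Z \<in> Zs n. x \<notin> Z})"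
    proof
      fix h assume h: "h \<in> S n - cp_nbhd X (\<lambda>x. 0) K \<epsilon>"
      then obtain Z where Z: "Z \<in> Zs n" "h = HH n Z" by (auto simp: S_def)
      have "\<exists>x\<in>K. x \<notin> Z"
      proof (rule ccontr)
        assume "\<not> (\<exists>x\<in>K. x \<notin> Z)"
        then have "\<forall>x\<in>K. h x = 0" using HH[OF Z(1)] Z(2) K by (simp add: subset_iff)
        then have "h \<in> cp_nbhd X (\<lambda>x. 0) K \<epsilon>" using HH[OF Z(1)] Z K by (auto simp: cp_nbhd_def)
        then show False using h by blast
      qed
      then show "h \<in> HH n ` (\<Union>x\<in>K. {Z \<in> Zs n. x \<notin> Z})" using Z by blast
    qed
    moreover have "finite (\<Union>x\<in>K. {Z \<in> Zs n. x \<notin> Z})"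
      using K Fz[of n] by (auto simp: gamma_cover_def Zs_def)
    ultimately show "finite (S n - cp_nbhd X (\<lambda>x. 0) K \<epsilon>)" by (meson finite_imageI finite_subset)
  qed
  have "(\<lambda>x. 0::real) \<in> Cfun X" by (simp add: Cfun_def)
  with H have C: "Cp_Ufin_Gamma_Omega X (\<lambda>x. 0)" by blast
  have SG': "\<forall>n. S n \<in> Gamma_f X (\<lambda>x. 0)" using SG by blast
  have ex: "\<exists>F. (\<forall>n. finite (F n) \<and> F n \<subseteq> S n) \<and>
     (\<forall>K \<epsilon>. finite K \<and> K \<subseteq> topspace X \<and> (\<epsilon>::real) > 0 \<longrightarrow>
              (\<exists>n. \<forall>x\<in>K. \<exists>g\<in>F n. \<bar>g x - 0\<bar> < \<epsilon>))"
    using C[unfolded Cp_Ufin_Gamma_Omega_def, rule_format, OF SG] .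
  obtain Fs where FsA: "(\<forall>n. finite (Fs n) \<and> Fs n \<subseteq> S n) \<and>
     (\<forall>K \<epsilon>. finite K \<and> K \<subseteq> topspace X \<and> (\<epsilon>::real) > 0 \<longrightarrow>
              (\<exists>n. \<forall>x\<in>K. \<exists>g\<in>Fs n. \<bar>g x - 0\<bar> < \<epsilon>))"
    by (rule exE[OF ex]) (rule that)
  have Fs: "\<And>n. finite (Fs n) \<and> Fs n \<subseteq> S n" using conjunct1[OF FsA] by (rule spec)
  have Fs2: "\<And>K \<epsilon>. finite K \<and> K \<subseteq> topspace X \<and> (\<epsilon>::real) > 0 \<Longrightarrow>
              (\<exists>n. \<forall>x\<in>K. \<exists>g\<in>Fs n. \<bar>g x - 0\<bar> < \<epsilon>)" using conjunct2[OF FsA] by blast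
  define pZ where "pZ n h = (SOME Z. Z \<in> Zs n \<and> HH n Z = h)" for n h
  have pZ: "pZ n h \<in> Zs n \<and> HH n (pZ n h) = h" if "h \<in> Fs n" for n h
  proof -
    have "\<exists>Z. Z \<in> Zs n \<and> HH n Z = h" using Fs[of n] that by (auto simp: S_def)
    then show ?thesis unfolding pZ_def by (rule someI_ex)
  qed
  show "\<exists>F. (\<forall>n. finite (F n) \<and> F n \<subseteq> \<U> n) \<and> (\<forall>K. finite K \<and> K \<subseteq> topspace X \<longrightarrow> (\<exists>n. K \<subseteq> \<Union> (F n)))"
  proof (intro exI[of _ "\<lambda>n. (\<lambda>h. UZ n (pZ n h)) ` Fs n"] conjI allI impI)
    fix n
    show "finite ((\<lambda>h. UZ n (pZ n h)) ` Fs n)" using Fs by blast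
    show "(\<lambda>h. UZ n (pZ n h)) ` Fs n \<subseteq> \<U> n" using pZ UZ by blast
  next
    fix K assume K: "finite K \<and> K \<subseteq> topspace X"
    then obtain n where n: "\<forall>x\<in>K. \<exists>g\<in>Fs n. \<bar>g x - 0\<bar> < 1" using Fs2[of K 1] by auto
    show "\<exists>n. K \<subseteq> \<Union> ((\<lambda>h. UZ n (pZ n h)) ` Fs n)"
    proof (intro exI[of _ n] subsetI)
      fix x assume x: "x \<in> K"
      then obtain g where g: "g \<in> Fs n" "\<bar>g x\<bar> < 1" using n by auto
      have xt: "x \<in> topspace X" using x K by blast
      have "x \<in> UZ n (pZ n g)"
      proof (rule ccontr)
        assume "x \<notin> UZ n (pZ n g)"
        then have "HH n (pZ n g) x = 1" using HH[OF conjunct1[OF pZ[OF g(1)]]] xt by blast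
        then have "g x = 1" using pZ[OF g(1)] by simp
        then show False using g(2) by simp
      qed
      then show "x \<in> \<Union> ((\<lambda>h. UZ n (pZ n h)) ` Fs n)" using g(1) by blast
    qed
  qed
qed


lemma good_GammaF:
  fixes f :: "'a \<Rightarrow> real" and e :: real
  assumes f: "f \<in> Cfun X" and SG: "S \<in> Gamma_f X f" and e: "e > 0"
    and good: "\<not> (\<exists>\<V>. \<V> \<subseteq> (\<lambda>g. {x \<in> topspace X. \<bar>g x - f x\<bar> < e}) ` S \<and> finite \<V> \<and> \<Union>\<V> = topspace X)"
  shows "(\<lambda>g. {x \<in> topspace X. \<bar>g x - f x\<bar> < e}) ` S \<in> Gamma_F X"
proof -
  define Ug where "Ug g = {x \<in> topspace X. \<bar>g x - f x\<bar> < e}" for g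
  define \<U> where "\<U> = Ug ` S"
  have good': "\<not> (\<exists>\<V>. \<V> \<subseteq> \<U> \<and> finite \<V> \<and> \<Union>\<V> = topspace X)"
    using good unfolding \<U>_def Ug_def by simp
  have Sinf: "infinite S" and SC: "S \<subseteq> Cfun X"
    and Sfin: "\<And>K \<epsilon>. finite K \<Longrightarrow> K \<subseteq> topspace X \<Longrightarrow> \<epsilon> > 0 \<Longrightarrow> finite (S - cp_nbhd X f K \<epsilon>)"
    using SG by (auto simp: Gamma_f_def)
  have fc: "continuous_map X euclideanreal f" using f by (simp add: Cfun_def)
  have gc: "continuous_map X euclideanreal g" if "g \<in> S" for g using SC that by (auto simp: Cfun_def)
  have bad_fin: "finite {g \<in> S. \<bar>g x - f x\<bar> \<ge> d}" if "x \<in> topspace X" "d > 0" for x d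
  proof -
    have "{g \<in> S. \<bar>g x - f x\<bar> \<ge> d} \<subseteq> S - cp_nbhd X f {x} d" by (auto simp: cp_nbhd_def)
    moreover have "finite (S - cp_nbhd X f {x} d)" using Sfin[of "{x}" d] that by simp
    ultimately show ?thesis by (rule finite_subset)
  qed
  have ex_good: "\<exists>g\<in>S. \<bar>g x - f x\<bar> < d" if "x \<in> topspace X" "d > 0" for x d
  proof -
    have "infinite (S - {g \<in> S. \<bar>g x - f x\<bar> \<ge> d})" using Sinf bad_fin[OF that] by simp
    then obtain g where "g \<in> S - {g \<in> S. \<bar>g x - f x\<bar> \<ge> d}" using infinite_imp_nonempty by blast
    then show ?thesis by (auto simp: not_le)
  qed
  have Usub: "U \<subseteq> topspace X" if "U \<in> \<U>" for U using that by (auto simp: \<U>_def Ug_def)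
  define gU where "gU U = (SOME g. g \<in> S \<and> Ug g = U)" for U
  have gU: "gU U \<in> S \<and> Ug (gU U) = U" if "U \<in> \<U>" for U
  proof -
    have "\<exists>g. g \<in> S \<and> Ug g = U" using that by (auto simp: \<U>_def)
    then show ?thesis unfolding gU_def by (rule someI_ex)
  qed
  have Utop: "topspace X \<notin> \<U>"
  proof
    assume "topspace X \<in> \<U>"
    then have "{topspace X} \<subseteq> \<U> \<and> finite {topspace X} \<and> \<Union>{topspace X} = topspace X" by simp
    then show False using good' by blast
  qed
  have Uunion: "\<Union>\<U> = topspace X"
  proof
    show "\<Union>\<U> \<subseteq> topspace X" using Usub by blast
    show "topspace X \<subseteq> \<Union>\<U>"
    proof
      fix x assume x: "x \<in> topspace X"
      then obtain g where "g \<in> S" "\<bar>g x - f x\<bar> < e" using ex_good e by blast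
      then show "x \<in> \<Union>\<U>" using x by (auto simp: \<U>_def Ug_def)
    qed
  qed
  have Uinf: "infinite \<U>"
  proof
    assume "finite \<U>"
    then have "\<U> \<subseteq> \<U> \<and> finite \<U> \<and> \<Union>\<U> = topspace X" using Uunion by simp
    then show False using good' by blast
  qed
  define Fz where "Fz U = {x \<in> topspace X. \<bar>gU U x - f x\<bar> \<le> e/2}" for U
  have Fzsub: "Fz U \<subseteq> U" if "U \<in> \<U>" for U
  proof
    fix x assume "x \<in> Fz U"
    then have "x \<in> Ug (gU U)" using e by (auto simp: Fz_def Ug_def)
    then show "x \<in> U" using gU[OF that] by simp
  qed
  have badFz: "finite {U \<in> \<U>. x \<notin> Fz U}" if x: "x \<in> topspace X" for x
  proof -
    have "{U \<in> \<U>. x \<notin> Fz U} \<subseteq> Ug ` {g \<in> S. \<bar>g x - f x\<bar> \<ge> e/2}"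
    proof
      fix U assume U: "U \<in> {U \<in> \<U>. x \<notin> Fz U}"
      then have "gU U \<in> {g \<in> S. \<bar>g x - f x\<bar> \<ge> e/2}" using gU x by (auto simp: Fz_def)
      moreover have "U = Ug (gU U)" using gU U by auto
      ultimately show "U \<in> Ug ` {g \<in> S. \<bar>g x - f x\<bar> \<ge> e/2}" by blast
    qed
    moreover have "finite (Ug ` {g \<in> S. \<bar>g x - f x\<bar> \<ge> e/2})" using bad_fin[OF x, of "e/2"] e by simp
    ultimately show ?thesis by (rule finite_subset)
  qed
  have Fzunion: "\<Union>(Fz ` \<U>) = topspace X"
  proof
    show "\<Union>(Fz ` \<U>) \<subseteq> topspace X" by (auto simp: Fz_def)
    show "topspace X \<subseteq> \<Union>(Fz ` \<U>)"
    proof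
      fix x assume x: "x \<in> topspace X"
      have "infinite (\<U> - {U \<in> \<U>. x \<notin> Fz U})" using Uinf badFz[OF x] by simp
      then obtain U where "U \<in> \<U> - {U \<in> \<U>. x \<notin> Fz U}" using infinite_imp_nonempty by blast
      then show "x \<in> \<Union>(Fz ` \<U>)" by auto
    qed
  qed
  have Fzinf: "infinite (Fz ` \<U>)"
  proof
    assume fin: "finite (Fz ` \<U>)"
    define pick where "pick W = (SOME U. U \<in> \<U> \<and> Fz U = W)" for W
    have pick: "pick W \<in> \<U> \<and> Fz (pick W) = W" if "W \<in> Fz ` \<U>" for W
    proof -
      have "\<exists>U. U \<in> \<U> \<and> Fz U = W" using that by auto
      then show ?thesis unfolding pick_def by (rule someI_ex)
    qed
    have sub: "pick ` (Fz ` \<U>) \<subseteq> \<U>"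
    proof
      fix V assume "V \<in> pick ` (Fz ` \<U>)"
      then obtain W where "W \<in> Fz ` \<U>" "V = pick W" by blast
      then show "V \<in> \<U>" using pick by simp
    qed
    moreover have "finite (pick ` (Fz ` \<U>))" using fin by blast
    moreover have "\<Union>(pick ` (Fz ` \<U>)) = topspace X"
    proof
      show "\<Union>(pick ` (Fz ` \<U>)) \<subseteq> topspace X" using sub Usub by (meson Union_least subsetD)
      show "topspace X \<subseteq> \<Union>(pick ` (Fz ` \<U>))"
      proof
        fix x assume "x \<in> topspace X"
        then obtain U where U: "U \<in> \<U>" "x \<in> Fz U" using Fzunion by blast
        then have "x \<in> Fz (pick (Fz U))" using pick[of "Fz U"] by auto
        also have "\<dots> \<subseteq> pick (Fz U)" using Fzsub pick[of "Fz U"] U by blast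
        finally show "x \<in> \<Union>(pick ` (Fz ` \<U>))" using U by blast
      qed
    qed
    ultimately have "\<exists>\<V>. \<V> \<subseteq> \<U> \<and> finite \<V> \<and> \<Union>\<V> = topspace X"
      by (intro exI[of _ "pick ` (Fz ` \<U>)"] conjI)
    then show False using good' by simp
  qed
  have Fztop: "topspace X \<notin> Fz ` \<U>"
  proof
    assume "topspace X \<in> Fz ` \<U>"
    then obtain U where U: "U \<in> \<U>" "Fz U = topspace X" by auto
    then have "U = topspace X" using Fzsub[OF U(1)] Usub[OF U(1)] U(2) by (intro subset_antisym) auto
    then show False using U Utop by simp
  qed
  have gcU: "gamma_cover X \<U>"
    unfolding gamma_cover_def is_cover_def
  proof (intro conjI ballI)
    fix x assume x: "x \<in> topspace X"
    have "{U \<in> \<U>. x \<notin> U} \<subseteq> Ug ` {g \<in> S. \<bar>g x - f x\<bar> \<ge> e}"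
      using x by (auto simp: \<U>_def Ug_def)
    moreover have "finite (Ug ` {g \<in> S. \<bar>g x - f x\<bar> \<ge> e})" using bad_fin[OF x e] by simp
    ultimately show "finite {U \<in> \<U>. x \<notin> U}" by (rule finite_subset)
  qed (use Uunion Utop Uinf in auto)
  have gcF: "gamma_cover X (Fz ` \<U>)"
    unfolding gamma_cover_def is_cover_def
  proof (intro conjI ballI)
    fix x assume x: "x \<in> topspace X"
    have "{V \<in> Fz ` \<U>. x \<notin> V} \<subseteq> Fz ` {U \<in> \<U>. x \<notin> Fz U}" by auto
    moreover have "finite (Fz ` {U \<in> \<U>. x \<notin> Fz U})" using badFz[OF x] by simp
    ultimately show "finite {V \<in> Fz ` \<U>. x \<notin> V}" by (rule finite_subset)
  qed (use Fzunion Fztop Fzinf in auto)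
  have coz: "cozero_set X U" if U: "U \<in> \<U>" for U
  proof -
    obtain g where g: "g \<in> S" "U = Ug g" using U by (auto simp: \<U>_def)
    have "continuous_map X euclideanreal (\<lambda>x. max 0 (e - \<bar>g x - f x\<bar>))"
      by (intro continuous_intros gc[OF g(1)] fc)
    moreover have "U = {x \<in> topspace X. max 0 (e - \<bar>g x - f x\<bar>) \<noteq> 0}"
      using g by (auto simp: Ug_def)
    ultimately show ?thesis unfolding cozero_set_def by blast
  qed
  have zer: "zero_set X (Fz U)" if "U \<in> \<U>" for U
  proof -
    have "continuous_map X euclideanreal (\<lambda>x. max 0 (\<bar>gU U x - f x\<bar> - e/2))"
      by (intro continuous_intros gc fc conjunct1[OF gU[OF that]])
    moreover have "Fz U = {x \<in> topspace X. max 0 (\<bar>gU U x - f x\<bar> - e/2) = 0}"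
      by (auto simp: Fz_def max_def split: if_splits)
    ultimately show ?thesis unfolding zero_set_def by blast
  qed
  have "\<U> \<in> Gamma_F X"
    unfolding Gamma_F_def
    by (intro CollectI conjI ballI exI[of _ Fz] gcU coz zer Fzsub gcF)
  then show ?thesis unfolding \<U>_def Ug_def .
qed


lemma dir21:
  assumes H: "X_Ufin_GammaF_Omega X" and f: "f \<in> Cfun X"
  shows "Cp_Ufin_Gamma_Omega X f"
  unfolding Cp_Ufin_Gamma_Omega_def
proof (intro allI impI)
  fix S :: "nat \<Rightarrow> ('a \<Rightarrow> real) set"
  assume S: "\<forall>n. S n \<in> Gamma_f X f"
  define e where "e n = 1 / (real n + 1)" for n
  define Ug where "Ug n g = {x \<in> topspace X. \<bar>g x - f x\<bar> < e n}" for n g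
  define \<U> where "\<U> n = Ug n ` S n" for n
  define good where "good n \<longleftrightarrow> \<not> (\<exists>\<V>. \<V> \<subseteq> \<U> n \<and> finite \<V> \<and> \<Union>\<V> = topspace X)" for n
  have epos: "e n > 0" for n by (simp add: e_def)
  have GF: "\<U> n \<in> Gamma_F X" if "good n" for n
    using good_GammaF[OF f spec[OF S, of n] epos[of n]] that
    unfolding good_def \<U>_def Ug_def by blast
  have Usub: "U \<subseteq> topspace X" if "U \<in> \<U> n" for U n using that by (auto simp: \<U>_def Ug_def)
  define gU where "gU n U = (SOME g. g \<in> S n \<and> Ug n g = U)" for n U
  have gU: "gU n U \<in> S n \<and> Ug n (gU n U) = U" if "U \<in> \<U> n" for n U
  proof -
    have "\<exists>g. g \<in> S n \<and> Ug n g = U" using that by (auto simp: \<U>_def)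
    then show ?thesis unfolding gU_def by (rule someI_ex)
  qed
  define cov where "cov n = (SOME \<V>. \<V> \<subseteq> \<U> n \<and> finite \<V> \<and> \<Union>\<V> = topspace X)" for n
  have cov: "cov n \<subseteq> \<U> n \<and> finite (cov n) \<and> \<Union>(cov n) = topspace X" if "\<not> good n" for n
  proof -
    have "\<exists>\<V>. \<V> \<subseteq> \<U> n \<and> finite \<V> \<and> \<Union>\<V> = topspace X" using that unfolding good_def by blast
    then show ?thesis unfolding cov_def by (rule someI_ex)
  qed
  have CL: "\<exists>Sel. (\<forall>n. finite (Sel n) \<and> Sel n \<subseteq> \<U> n) \<and>
     (\<forall>K N. finite K \<and> K \<subseteq> topspace X \<longrightarrow> (\<exists>n\<ge>N. K \<subseteq> \<Union>(Sel n)))"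
  proof (cases "\<exists>n0. good n0")
    case False
    show ?thesis
    proof (intro exI[of _ cov] conjI allI impI)
      fix n show "finite (cov n)" "cov n \<subseteq> \<U> n" using cov False by blast+
    next
      fix K N assume "finite K \<and> K \<subseteq> topspace X"
      then have "K \<subseteq> \<Union>(cov N)" using cov False by blast
      then show "\<exists>n\<ge>N. K \<subseteq> \<Union>(cov n)" by blast
    qed
  next
    case True
    then obtain n0 where n0: "good n0" by blast
    define W where "W n = (if good n then \<U> n else \<U> n0)" for n
    have W: "W n \<in> Gamma_F X \<and> \<not> (\<exists>\<V>. \<V> \<subseteq> W n \<and> finite \<V> \<and> \<Union>\<V> = topspace X)" for n
    proof (cases "good n")
      case True
      then have "W n = \<U> n" by (simp add: W_def)
      then show ?thesis using GF[OF True] True unfolding good_def by simp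
    next
      case False
      then have "W n = \<U> n0" by (simp add: W_def)
      then show ?thesis using GF[OF n0] n0 unfolding good_def by simp
    qed
    have Wsub: "W n \<subseteq> \<U> n" if "good n" for n using that by (simp add: W_def)
    have WsubT: "U \<subseteq> topspace X" if "U \<in> W n" for U n
      using that Usub by (auto simp: W_def split: if_splits)
    have ex: "\<exists>G. (\<forall>n. finite (G n) \<and> G n \<subseteq> W n) \<and>
           (\<forall>K. finite K \<and> K \<subseteq> topspace X \<longrightarrow> (\<exists>n. K \<subseteq> \<Union> (G n)))"
      using H[unfolded X_Ufin_GammaF_Omega_def, rule_format, OF W] .
    obtain G where GA: "(\<forall>n. finite (G n) \<and> G n \<subseteq> W n) \<and>
           (\<forall>K. finite K \<and> K \<subseteq> topspace X \<longrightarrow> (\<exists>n. K \<subseteq> \<Union> (G n)))"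
      by (rule exE[OF ex]) (rule that)
    have G1: "finite (G n) \<and> G n \<subseteq> W n" for n using GA by blast
    have G2: "\<exists>n. K \<subseteq> \<Union> (G n)" if "finite K" "K \<subseteq> topspace X" for K using GA that by blast
    have notall: "\<exists>x. x \<in> topspace X \<and> x \<notin> \<Union>(G n)" for n
    proof (rule ccontr)
      assume "\<not> (\<exists>x. x \<in> topspace X \<and> x \<notin> \<Union>(G n))"
      then have "topspace X \<subseteq> \<Union>(G n)" by blast
      moreover have "\<Union>(G n) \<subseteq> topspace X" using G1[of n] WsubT by blast
      ultimately have "\<Union>(G n) = topspace X" by blast
      then show False using W[of n] G1[of n] by blast
    qed
    define Sel where "Sel n = (if good n then G n else cov n)" for n
    show ?thesis
    proof (intro exI[of _ Sel] conjI allI impI)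
      fix n
      show "finite (Sel n)" using G1 cov by (simp add: Sel_def)
      show "Sel n \<subseteq> \<U> n"
      proof (cases "good n")
        case True
        have "G n \<subseteq> \<U> n" using G1[of n] Wsub[OF True] by (meson order_trans)
        then show ?thesis using True by (simp add: Sel_def)
      next
        case False then show ?thesis using cov[of n] by (simp add: Sel_def)
      qed
    next
      fix K N assume K: "finite K \<and> K \<subseteq> topspace X"
      show "\<exists>n\<ge>N. K \<subseteq> \<Union>(Sel n)"
      proof (cases "\<exists>n\<ge>N. \<not> good n")
        case True
        then obtain n where n: "n \<ge> N" "\<not> good n" by blast
        then have "K \<subseteq> \<Union>(Sel n)" using cov[OF n(2)] K by (simp add: Sel_def)
        then show ?thesis using n by blast
      next
        case False
        obtain xs where xs: "\<And>i. xs i \<in> topspace X \<and> xs i \<notin> \<Union>(G i)" using notall by metis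
        define K' where "K' = K \<union> xs ` {..<N}"
        have "finite K'" "K' \<subseteq> topspace X" using K xs by (auto simp: K'_def)
        then obtain n where n: "K' \<subseteq> \<Union>(G n)" using G2 by blast
        have nN: "n \<ge> N"
        proof (rule ccontr)
          assume "\<not> n \<ge> N"
          then have "xs n \<in> K'" by (auto simp: K'_def)
          then show False using n xs[of n] by blast
        qed
        then have "good n" using False by blast
        then have "K \<subseteq> \<Union>(Sel n)" using n by (auto simp: Sel_def K'_def)
        then show ?thesis using nN by blast
      qed
    qed
  qed
  obtain Sel where SelA: "(\<forall>n. finite (Sel n) \<and> Sel n \<subseteq> \<U> n) \<and>
     (\<forall>K N. finite K \<and> K \<subseteq> topspace X \<longrightarrow> (\<exists>n\<ge>N. K \<subseteq> \<Union>(Sel n)))"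
    by (rule exE[OF CL]) (rule that)
  have Sel1: "\<And>n. finite (Sel n) \<and> Sel n \<subseteq> \<U> n" using SelA by blast
  have Sel2: "\<And>K N. finite K \<Longrightarrow> K \<subseteq> topspace X \<Longrightarrow> (\<exists>n\<ge>N. K \<subseteq> \<Union>(Sel n))"
    using SelA by blast
  show "\<exists>F. (\<forall>n. finite (F n) \<and> F n \<subseteq> S n) \<and>
           (\<forall>K \<epsilon>. finite K \<and> K \<subseteq> topspace X \<and> \<epsilon> > 0 \<longrightarrow>
              (\<exists>n. \<forall>x\<in>K. \<exists>g\<in>F n. \<bar>g x - f x\<bar> < \<epsilon>))"
  proof (intro exI[of _ "\<lambda>n. gU n ` Sel n"] conjI allI impI)
    fix n
    show "finite (gU n ` Sel n)" using Sel1 by blast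
    show "gU n ` Sel n \<subseteq> S n"
    proof
      fix g assume "g \<in> gU n ` Sel n"
      then obtain U where "U \<in> Sel n" "g = gU n U" by blast
      then show "g \<in> S n" using Sel1[of n] gU[of U n] by blast
    qed
  next
    fix K and \<epsilon> :: real
    assume K: "finite K \<and> K \<subseteq> topspace X \<and> \<epsilon> > 0"
    obtain N where N: "N > 0" "inverse (real N) < \<epsilon>" using ex_inverse_of_nat_less K by blast
    have eN: "e N < \<epsilon>"
    proof -
      have "e N \<le> inverse (real N)" using N(1) by (simp add: e_def field_simps)
      then show ?thesis using N(2) by linarith
    qed
    obtain n where n: "n \<ge> N" "K \<subseteq> \<Union>(Sel n)" using Sel2 K by blast
    have en: "e n \<le> e N" using n(1) by (simp add: e_def frac_le)
    show "\<exists>n. \<forall>x\<in>K. \<exists>g\<in>gU n ` Sel n. \<bar>g x - f x\<bar> < \<epsilon>"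
    proof (intro exI[of _ n] ballI)
      fix x assume x: "x \<in> K"
      then obtain U where U: "U \<in> Sel n" "x \<in> U" using n(2) by blast
      have UU: "U \<in> \<U> n" using U(1) Sel1 by blast
      have "x \<in> Ug n (gU n U)" using gU[OF UU] U(2) by simp
      then have "\<bar>gU n U x - f x\<bar> < e n" by (simp add: Ug_def)
      then have "\<bar>gU n U x - f x\<bar> < \<epsilon>" using en eN by linarith
      then show "\<exists>g\<in>gU n ` Sel n. \<bar>g x - f x\<bar> < \<epsilon>" using U(1) by blast
    qed
  qed
qed

theorem mainTheorem13:
  fixes X :: "'a topology"
  assumes "tychonoff_space X"
  shows "(\<forall>f\<in>Cfun X. Cp_Ufin_Gamma_Omega X f) \<longleftrightarrow> X_Ufin_GammaF_Omega X"
  using dir12 dir21 by blast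

end
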